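(* The map $\tau_{sm}:\widetilde{\mathbb{K}}_{sm}\to\widetilde{\mathbb{K}}_{co}$, $[(r_\varepsilon)_\varepsilon]\mapsto[(r_\varepsilon)_\varepsilon]$, is a ring isomorphism; i.e., $\widetilde{\mathbb{K}}_{sm}\cong\widetilde{\mathbb{K}}_{co}$ via $\tau_{sm}$.
   Context: Let $I=(0,1]$ and $\mathbb{K}\in\{\mathbb{R},\mathbb{C}\}$. Let $\mathcal{E}_M=\{(r_\varepsilon)_\varepsilon\in\mathbb{K}^I:\exists N\in\mathbb{N}: |r_\varepsilon|=O(\varepsilon^{-N})\text{ as }\varepsilon\to0\}$ and $\mathcal{N}=\{(r_\varepsilon)_\varepsilon\in\mathbb{K}^I:\forall m\in\mathbb{N}: |r_\varepsilon|=O(\varepsilon^{m})\}$. Let $\mathcal{E}_{M,co}$, $\mathcal{N}_{co}$ (resp. $\mathcal{E}_{M,sm}$, $\mathcal{N}_{sm}$) be the subsets of $\mathcal{E}_M$, $\mathcal{N}$ consisting of nets with $\varepsilon\mapsto r_\varepsilon$ continuous (resp. smooth) on $I$; $\widetilde{\mathbb{K}}_{co}=\mathcal{E}_{M,co}/\mathcal{N}_{co}$ and $\widetilde{\mathbb{K}}_{sm}=\mathcal{E}_{M,sm}/\mathcal{N}_{sm}$ are rings with componentwise operations. *)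

theory Defs
  imports Complex_Main "HOL-Algebra.QuotRing"
begin

text \<open>Nets indexed by I = (0,1] are represented as functions real => 'k that vanish
  outside I (canonical representatives, so that equality of nets is equality of functions).\<close>

definition I_eps :: "real set" where
  "I_eps = {0<..1}"

definition net :: "(real \<Rightarrow> 'k::zero) \<Rightarrow> bool" where
  "net r \<longleftrightarrow> (\<forall>e. e \<notin> I_eps \<longrightarrow> r e = 0)"

definition moderate :: "(real \<Rightarrow> 'k::real_normed_field) \<Rightarrow> bool" where
  "moderate r \<longleftrightarrow> (\<exists>N::nat. \<exists>C. \<forall>\<^sub>F e in at_right 0. norm (r e) \<le> C * (1 / e) ^ N)"

definition negligible :: "(real \<Rightarrow> 'k::real_normed_field) \<Rightarrow> bool" where
  "negligible r \<longleftrightarrow> (\<forall>m::nat. \<exists>C. \<forall>\<^sub>F e in at_right 0. norm (r e) \<le> C * e ^ m)"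

definition smooth_on_I :: "(real \<Rightarrow> 'k::real_normed_field) \<Rightarrow> bool" where
  "smooth_on_I r \<longleftrightarrow> (\<exists>D :: nat \<Rightarrow> real \<Rightarrow> 'k. (\<forall>e\<in>I_eps. D 0 e = r e) \<and>
     (\<forall>n. \<forall>e\<in>I_eps. (D n has_vector_derivative D (Suc n) e) (at e within I_eps)))"

definition EM_co :: "(real \<Rightarrow> 'k::real_normed_field) set" where
  "EM_co = {r. net r \<and> moderate r \<and> continuous_on I_eps r}"

definition N_co :: "(real \<Rightarrow> 'k::real_normed_field) set" where
  "N_co = {r. net r \<and> negligible r \<and> continuous_on I_eps r}"

definition EM_sm :: "(real \<Rightarrow> 'k::real_normed_field) set" where
  "EM_sm = {r. net r \<and> moderate r \<and> smooth_on_I r}"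

definition N_sm :: "(real \<Rightarrow> 'k::real_normed_field) set" where
  "N_sm = {r. net r \<and> negligible r \<and> smooth_on_I r}"

definition net_ring :: "(real \<Rightarrow> 'k::real_normed_field) set \<Rightarrow> (real \<Rightarrow> 'k) ring" where
  "net_ring S = \<lparr>carrier = S, mult = (\<lambda>r s e. r e * s e),
      one = (\<lambda>e. if e \<in> I_eps then 1 else 0), zero = (\<lambda>e. 0), add = (\<lambda>r s e. r e + s e)\<rparr>"

definition K_co :: "(real \<Rightarrow> 'k::real_normed_field) set ring" where
  "K_co = net_ring EM_co Quot N_co"

definition K_sm :: "(real \<Rightarrow> 'k::real_normed_field) set ring" where
  "K_sm = net_ring EM_sm Quot N_sm"

text \<open>tau_sm [r]_sm = [r]_co: the N_co-class of any (every) representative of the given class.\<close>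
definition tau_sm :: "(real \<Rightarrow> 'k::real_normed_field) set \<Rightarrow> (real \<Rightarrow> 'k) set" where
  "tau_sm X = (\<Union>r\<in>X. N_co +>\<^bsub>net_ring EM_co\<^esub> r)"

end

theory Submission
  imports Defs "HOL-Analysis.Analysis" "HOL-Computational_Algebra.Polynomial"
begin

fun Cn :: "nat \<Rightarrow> (real \<Rightarrow> real) \<Rightarrow> real set \<Rightarrow> bool" where
  "Cn 0 f U = continuous_on U f"
| "Cn (Suc n) f U = (\<exists>f'. (\<forall>x\<in>U. (f has_real_derivative f' x) (at x)) \<and> Cn n f' U)"

lemma Cn_cong:
  assumes "open U" "\<And>x. x \<in> U \<Longrightarrow> f x = g x" "Cn n f U"
  shows "Cn n g U"
  using assms
proof (induction n arbitrary: f g)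
  case 0
  then show ?case using continuous_on_cong by force
next
  case (Suc n)
  then obtain f' where f': "\<forall>x\<in>U. (f has_real_derivative f' x) (at x)" "Cn n f' U" by auto
  have "\<forall>x\<in>U. (g has_real_derivative f' x) (at x)"
    using f'(1) Suc.prems(1,2) has_field_derivative_transform_within_open by blast
  then show ?case using f'(2) by auto
qed

lemma Cn_Suc_imp: "Cn (Suc n) f U \<Longrightarrow> Cn n f U"
proof (induction n arbitrary: f)
  case 0
  then obtain f' where "\<forall>x\<in>U. (f has_real_derivative f' x) (at x)" by auto
  then have "\<forall>x\<in>U. isCont f x" using DERIV_isCont by blast
  then show ?case
    by (simp add: continuous_at_imp_continuous_on)
next
  case (Suc n)
  then obtain f' where "\<forall>x\<in>U. (f has_real_derivative f' x) (at x)" "Cn (Suc n) f' U" by auto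
  then show ?case using Suc.IH by auto
qed

lemma Cn_subset: "Cn n f U \<Longrightarrow> V \<subseteq> U \<Longrightarrow> Cn n f V"
proof (induction n arbitrary: f)
  case 0
  then show ?case using continuous_on_subset by auto
next
  case (Suc n)
  then show ?case by auto
qed

lemma Cn_const: "Cn n (\<lambda>x. c) U"
proof (induction n arbitrary: c)
  case 0
  then show ?case by simp
next
  case (Suc n)
  have "\<forall>x\<in>U. ((\<lambda>x. c) has_real_derivative (\<lambda>x. 0) x) (at x)" by simp
  then show ?case using Suc[of 0] by (intro Cn.simps(2)[THEN iffD2] exI[of _ "\<lambda>x. 0"]) auto
qed

lemma Cn_id: "Cn n (\<lambda>x. x) U"
proof (cases n)
  case 0
  then show ?thesis by (simp add: continuous_on_id)
next
  case (Suc m)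
  have "\<forall>x\<in>U. ((\<lambda>x. x) has_real_derivative (\<lambda>x. 1) x) (at x)" by simp
  then show ?thesis using Suc Cn_const[of m 1 U] by (simp only: \<open>n = Suc m\<close>, intro Cn.simps(2)[THEN iffD2] exI[of _ "\<lambda>x. 1"]) auto
qed

lemma Cn_add: "Cn n f U \<Longrightarrow> Cn n g U \<Longrightarrow> Cn n (\<lambda>x. f x + g x) U"
proof (induction n arbitrary: f g)
  case 0
  then show ?case by (simp add: continuous_on_add)
next
  case (Suc n)
  from Suc.prems obtain f' g' where
    f': "\<forall>x\<in>U. (f has_real_derivative f' x) (at x)" "Cn n f' U" and
    g': "\<forall>x\<in>U. (g has_real_derivative g' x) (at x)" "Cn n g' U" by auto
  have "\<forall>x\<in>U. ((\<lambda>x. f x + g x) has_real_derivative (\<lambda>x. f' x + g' x) x) (at x)"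
    using f' g' by (auto intro: derivative_intros)
  then show ?case using Suc.IH f' g' by auto
qed

lemma Cn_mult: "Cn n f U \<Longrightarrow> Cn n g U \<Longrightarrow> Cn n (\<lambda>x. f x * g x) U"
proof (induction n arbitrary: f g)
  case 0
  then show ?case by (simp add: continuous_on_mult)
next
  case (Suc n)
  from Suc.prems obtain f' g' where
    f': "\<forall>x\<in>U. (f has_real_derivative f' x) (at x)" "Cn n f' U" and
    g': "\<forall>x\<in>U. (g has_real_derivative g' x) (at x)" "Cn n g' U" by auto
  have fn: "Cn n f U" "Cn n g U" using Suc.prems Cn_Suc_imp by blast+
  have "\<forall>x\<in>U. ((\<lambda>x. f x * g x) has_real_derivative (\<lambda>x. f' x * g x + f x * g' x) x) (at x)"
    using f' g' by (auto intro!: derivative_eq_intros)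
  moreover have "Cn n (\<lambda>x. f' x * g x + f x * g' x) U"
    using Suc.IH f' g' fn Cn_add by blast
  ultimately show ?case by auto
qed

lemma Cn_sum: "finite A \<Longrightarrow> (\<And>k. k \<in> A \<Longrightarrow> Cn n (f k) U) \<Longrightarrow> Cn n (\<lambda>x. \<Sum>k\<in>A. f k x) U"
proof (induction A rule: finite_induct)
  case empty
  then show ?case using Cn_const by simp
next
  case (insert a A)
  then show ?case using Cn_add[of n "f a" U] by simp
qed

lemma Cn_comp:
  assumes "\<And>x. x \<in> U \<Longrightarrow> g x \<in> V" "open V"
  shows "Cn n f V \<Longrightarrow> Cn n g U \<Longrightarrow> Cn n (\<lambda>x. f (g x)) U"
proof (induction n arbitrary: f)
  case 0
  then show ?case using assms by (simp only: Cn.simps, intro continuous_on_compose2[of V f U g]) (auto simp: assms(1))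
next
  case (Suc n)
  from Suc.prems obtain f' g' where
    f': "\<forall>x\<in>V. (f has_real_derivative f' x) (at x)" "Cn n f' V" and
    g': "\<forall>x\<in>U. (g has_real_derivative g' x) (at x)" "Cn n g' U" by auto
  have gn: "Cn n g U" using Suc.prems Cn_Suc_imp by blast
  have "\<forall>x\<in>U. ((\<lambda>x. f (g x)) has_real_derivative (\<lambda>x. f' (g x) * g' x) x) (at x)"
  proof
    fix x assume x: "x \<in> U"
    have 1: "(g has_real_derivative g' x) (at x)" using g' x by auto
    have 2: "(f has_real_derivative f' (g x)) (at (g x))" using f' x assms(1) by auto
    show "((\<lambda>x. f (g x)) has_real_derivative (\<lambda>x. f' (g x) * g' x) x) (at x)"
      using DERIV_chain'[OF 1 2] by (simp add: mult.commute)
  qed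
  moreover have "Cn n (\<lambda>x. f' (g x) * g' x) U"
    using Suc.IH f' g' gn Cn_mult by blast
  ultimately show ?case by auto
qed

lemma Cn_exp: "Cn n exp U"
proof (induction n)
  case 0
  then show ?case by (simp add: continuous_on_exp continuous_on_id)
next
  case (Suc n)
  have "\<forall>x\<in>U. (exp has_real_derivative exp x) (at x)" by (auto intro: DERIV_exp)
  then show ?case using Suc by (intro Cn.simps(2)[THEN iffD2] exI[of _ exp]) auto
qed

lemma Cn_inverse: "Cn n (\<lambda>x. inverse x) {0<..}"
proof (induction n)
  case 0
  then show ?case by (auto intro!: continuous_on_inverse continuous_on_id)
next
  case (Suc n)
  have "\<forall>x\<in>{0<..}. ((\<lambda>x. inverse x) has_real_derivative (\<lambda>x. - (inverse x * inverse x)) x) (at x)"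
    by (auto intro!: derivative_eq_intros simp: power2_eq_square)
  moreover have "Cn n (\<lambda>x. - (inverse x * inverse x)) {0<..}"
    using Cn_mult[OF Cn_const[of n "-1"] Cn_mult[OF Suc Suc]] by simp
  ultimately show ?case by auto
qed

lemma Cn_local:
  assumes "open U" "\<And>x. x \<in> U \<Longrightarrow> \<exists>V. open V \<and> x \<in> V \<and> V \<subseteq> U \<and> Cn n f V"
  shows "Cn n f U"
  using assms(2)
proof (induction n arbitrary: f)
  case 0
  have "\<forall>x\<in>U. isCont f x"
  proof
    fix x assume "x \<in> U"
    then obtain V where "open V" "x \<in> V" "continuous_on V f" using 0 by auto
    then show "isCont f x" using continuous_on_eq_continuous_at by blast
  qed
  then show ?case by (simp add: continuous_at_imp_continuous_on)
next
  case (Suc n)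
  have "\<exists>V. open V \<and> x \<in> V \<and> V \<subseteq> U \<and> Cn n (deriv f) V \<and> (f has_real_derivative deriv f x) (at x)"
    if "x \<in> U" for x
  proof -
    obtain V where V: "open V" "x \<in> V" "V \<subseteq> U" "Cn (Suc n) f V" using Suc.prems \<open>x \<in> U\<close> by blast
    then obtain f' where f': "\<forall>y\<in>V. (f has_real_derivative f' y) (at y)" "Cn n f' V" by auto
    have "\<And>y. y \<in> V \<Longrightarrow> f' y = deriv f y" using f'(1) DERIV_imp_deriv by metis
    then have "Cn n (deriv f) V" using Cn_cong[OF V(1) _ f'(2)] by blast
    moreover have "deriv f x = f' x" using f'(1) V(2) DERIV_imp_deriv by metis
    ultimately show ?thesis using V f' by auto
  qed
  then have "Cn n (deriv f) U" "\<forall>x\<in>U. (f has_real_derivative deriv f x) (at x)"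
    using Suc.IH[of "deriv f"] by blast+
  then show ?case by auto
qed

definition smoothR :: "(real \<Rightarrow> real) \<Rightarrow> real set \<Rightarrow> bool" where
  "smoothR f U \<longleftrightarrow> (\<forall>n. Cn n f U)"

lemma smooth_deriv:
  assumes "open U" "smoothR f U"
  shows "smoothR (deriv f) U" "\<And>x. x \<in> U \<Longrightarrow> (f has_real_derivative deriv f x) (at x)"
proof -
  show "smoothR (deriv f) U" unfolding smoothR_def
  proof
    fix n
    from assms(2) have "Cn (Suc n) f U" by (simp add: smoothR_def)
    then obtain f' where f': "\<forall>y\<in>U. (f has_real_derivative f' y) (at y)" "Cn n f' U" by auto
    have "\<And>y. y \<in> U \<Longrightarrow> f' y = deriv f y" using f'(1) DERIV_imp_deriv by metis
    then show "Cn n (deriv f) U" using Cn_cong[OF assms(1) _ f'(2)] by blast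
  qed
  fix x assume "x \<in> U"
  from assms(2) have "Cn (Suc 0) f U" by (simp add: smoothR_def)
  then obtain f' where f': "\<forall>y\<in>U. (f has_real_derivative f' y) (at y)" by auto
  then show "(f has_real_derivative deriv f x) (at x)" using \<open>x \<in> U\<close> DERIV_imp_deriv by metis
qed

lemma smooth_derivs:
  assumes "open U" "smoothR f U"
  shows "smoothR ((deriv ^^ k) f) U \<and> (\<forall>x\<in>U. ((deriv ^^ k) f has_real_derivative (deriv ^^ Suc k) f x) (at x))"
proof (induction k)
  case 0
  then show ?case using assms smooth_deriv by auto
next
  case (Suc k)
  then have "smoothR ((deriv ^^ Suc k) f) U" using assms(1) smooth_deriv(1) by simp
  then show ?case using assms(1) smooth_deriv(2)[of U "(deriv ^^ Suc k) f"] by simp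
qed


definition flatP :: "real poly \<Rightarrow> real \<Rightarrow> real" where
  "flatP P x = (if 0 < x then poly P (inverse x) * exp (- inverse x) else 0)"

definition Qop :: "real poly \<Rightarrow> real poly" where
  "Qop P = [:0,0,1:] * (P - pderiv P)"

lemma poly_exp_lim: fixes P :: "real poly" shows "((\<lambda>t. poly P t * exp (-t)) \<longlongrightarrow> 0) at_top"
proof -
  have eq: "(\<lambda>t. poly P t * exp (-t)) = (\<lambda>t. \<Sum>i\<le>degree P. coeff P i * (t^i / exp t))"
    by (simp add: poly_altdef sum_divide_distrib exp_minus field_simps)
  have "((\<lambda>t. \<Sum>i\<le>degree P. coeff P i * (t^i / exp t)) \<longlongrightarrow> (\<Sum>i\<le>degree P. coeff P i * 0)) at_top"
    by (intro tendsto_sum tendsto_mult tendsto_const tendsto_power_div_exp_0)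
  then show ?thesis unfolding eq by simp
qed

lemma flat_lim: fixes P :: "real poly" shows "((\<lambda>x. poly P (inverse x) * exp (- inverse x)) \<longlongrightarrow> 0) (at_right 0)"
  using filterlim_compose[OF poly_exp_lim[of P] filterlim_inverse_at_top_right] by (simp add: o_def)

lemma flatP_deriv: "(flatP P has_real_derivative flatP (Qop P) x) (at x)"
proof (cases "x > 0")
  case True
  have d1: "((\<lambda>y. poly P (inverse y)) has_real_derivative poly (pderiv P) (inverse x) * (- (inverse x ^ 2))) (at x)"
    using DERIV_chain'[OF DERIV_inverse[of x] poly_DERIV[of P "inverse x"]] True
    by (simp add: power2_eq_square algebra_simps)
  have d2: "((\<lambda>y. exp (- inverse y)) has_real_derivative exp (- inverse x) * (inverse x ^ 2)) (at x)"
    using True by (auto intro!: derivative_eq_intros simp: power2_eq_square)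
  have d: "((\<lambda>y. poly P (inverse y) * exp (- inverse y)) has_real_derivative
     poly (pderiv P) (inverse x) * (- (inverse x ^ 2)) * exp (- inverse x) + poly P (inverse x) * (exp (- inverse x) * (inverse x ^ 2))) (at x)"
    using DERIV_mult[OF d1 d2] by (simp add: mult.commute)
  have eq: "poly (pderiv P) (inverse x) * (- (inverse x ^ 2)) * exp (- inverse x) + poly P (inverse x) * (exp (- inverse x) * (inverse x ^ 2))
     = flatP (Qop P) x"
    using True by (simp add: flatP_def Qop_def algebra_simps power2_eq_square)
  show ?thesis
    using has_field_derivative_transform_within_open[OF d[unfolded eq], of "{0<..}"] True
    by (auto simp: flatP_def)
next
  case False
  show ?thesis
  proof (cases "x < 0")
    case True
    have "((\<lambda>y. 0) has_real_derivative 0) (at x)" by simp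
    then show ?thesis
      using has_field_derivative_transform_within_open[of "\<lambda>y. 0" 0 x "{..<0}" "flatP P"] True
      by (auto simp: flatP_def)
  next
    case False
    with \<open>\<not> x > 0\<close> have x0: "x = 0" by simp
    have L: "((\<lambda>y. (flatP P y - flatP P 0) / (y - 0)) \<longlongrightarrow> 0) (at_left 0)"
    proof (rule tendsto_eventually)
      show "\<forall>\<^sub>F y in at_left 0. (flatP P y - flatP P 0) / (y - 0) = 0"
        using eventually_at_left_real[of "-1::real" 0, OF neg_less_0_iff_less[THEN iffD2, OF zero_less_one]]
        by eventually_elim (auto simp: flatP_def)
    qed
    have R: "((\<lambda>y. (flatP P y - flatP P 0) / (y - 0)) \<longlongrightarrow> 0) (at_right 0)"
    proof -
      have "((\<lambda>y. poly (pCons 0 P) (inverse y) * exp (- inverse y)) \<longlongrightarrow> 0) (at_right 0)"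
        by (rule flat_lim)
      moreover have "\<forall>\<^sub>F y in at_right 0. poly (pCons 0 P) (inverse y) * exp (- inverse y) = (flatP P y - flatP P 0) / (y - 0)"
        using eventually_at_right_less[of "0::real"] by eventually_elim (auto simp: flatP_def field_simps)
      ultimately show ?thesis by (rule Lim_transform_eventually)
    qed
    have "((\<lambda>y. (flatP P y - flatP P 0) / (y - 0)) \<longlongrightarrow> 0) (at 0)"
      using L R by (simp add: filterlim_at_split)
    then show ?thesis using x0 by (simp add: has_field_derivative_iff flatP_def)
  qed
qed

lemma Cn_flatP: "Cn n (flatP P) U"
proof (induction n arbitrary: P)
  case 0
  have "\<forall>x\<in>U. isCont (flatP P) x" using flatP_deriv DERIV_isCont by blast
  then show ?case by (simp add: continuous_at_imp_continuous_on)
next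
  case (Suc n)
  then show ?case using flatP_deriv
    by (intro Cn.simps(2)[THEN iffD2] exI[of _ "flatP (Qop P)"]) auto
qed

definition psi :: "real \<Rightarrow> real" where "psi = flatP 1"

lemma psi_pos: "x > 0 \<Longrightarrow> psi x > 0" and psi_zero: "x \<le> 0 \<Longrightarrow> psi x = 0"
  and psi_nonneg: "psi x \<ge> 0"
  by (auto simp: psi_def flatP_def)

definition gstep :: "real \<Rightarrow> real" where
  "gstep x = psi x * inverse (psi x + psi (1 - x))"

lemma gstep_smooth: "smoothR gstep UNIV"
  unfolding smoothR_def
proof
  fix n
  have den: "Cn n (\<lambda>x. psi x + psi (1 - x)) UNIV"
    unfolding psi_def
    by (intro Cn_add Cn_flatP Cn_comp[of UNIV "\<lambda>x. 1 - x" UNIV n "flatP 1"])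
      (auto intro: Cn_add Cn_const Cn_mult Cn_id[of n UNIV, THEN Cn_mult[OF Cn_const[of n "-1"]], THEN Cn_add[OF Cn_const[of n 1]], simplified])
  have pos: "psi x + psi (1 - x) \<in> {0<..}" for x
  proof (cases "x > 0")
    case True then show ?thesis using psi_pos psi_nonneg add_pos_nonneg by auto
  next
    case False then show ?thesis using psi_pos[of "1-x"] psi_nonneg[of x] by auto
  qed
  have "Cn n (\<lambda>x. inverse (psi x + psi (1 - x))) UNIV"
    using Cn_comp[OF pos open_greaterThan Cn_inverse den] .
  then show "Cn n gstep UNIV"
    unfolding gstep_def using Cn_mult Cn_flatP psi_def by metis
qed

lemma gstep_zero: "x \<le> 0 \<Longrightarrow> gstep x = 0"
  by (simp add: gstep_def psi_zero)

lemma gstep_one: "x \<ge> 1 \<Longrightarrow> gstep x = 1"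
  using psi_pos[of x] psi_zero[of "1-x"] by (simp add: gstep_def)

lemma gstep_bounds: "0 \<le> gstep x" "gstep x \<le> 1"
  using psi_nonneg[of x] psi_nonneg[of "1-x"]
  by (auto simp: gstep_def divide_simps field_simps intro!: mult_nonneg_nonneg)


lemma Cn_diff: "Cn n f U \<Longrightarrow> Cn n g U \<Longrightarrow> Cn n (\<lambda>x. f x - g x) U"
  using Cn_add[of n f U "\<lambda>x. -1 * g x"] Cn_mult[OF Cn_const[of n "-1"], of g U] by simp

lemma Cn_shift: "Cn n (\<lambda>x. x + c) U"
  using Cn_add[OF Cn_id Cn_const] .

lemma Cn_rpf: "real_polynomial_function (p :: real \<Rightarrow> real) \<Longrightarrow> Cn n p U"
proof (induction rule: real_polynomial_function.induct)
  case (linear f)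
  then obtain c where "f = (\<lambda>x. x * c)" by (auto simp: real_bounded_linear)
  then show ?case using Cn_mult[OF Cn_id Cn_const] by simp
next
  case (const c)
  then show ?case by (rule Cn_const)
next
  case (add f g)
  then show ?case using Cn_add by blast
next
  case (mult f g)
  then show ?case using Cn_mult by blast
qed

lemma approx_R:
  fixes R :: "real \<Rightarrow> real" assumes contR: "continuous_on UNIV R"
  shows "\<exists>S. smoothR S UNIV \<and> (\<forall>u\<ge>0. \<bar>S u - R u\<bar> \<le> 2 * exp (-u))"
proof -
  have "\<forall>k::nat. \<exists>p. real_polynomial_function p \<and> (\<forall>x\<in>{real k - 1..real k + 1}. \<bar>R x - p x\<bar> < exp (-(real k + 1)))"
  proof
    fix k :: nat
    obtain p where "real_polynomial_function p" "\<And>x. x \<in> {real k - 1..real k + 1} \<Longrightarrow> \<bar>R x - p x\<bar> < exp (-(real k + 1))"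
      using Stone_Weierstrass_real_polynomial_function[of "{real k - 1..real k + 1}" R "exp (-(real k + 1))"]
        continuous_on_subset[OF contR] by auto
    then show "\<exists>p. real_polynomial_function p \<and> (\<forall>x\<in>{real k - 1..real k + 1}. \<bar>R x - p x\<bar> < exp (-(real k + 1)))"
      by blast
  qed
  then obtain p where p: "\<And>k. real_polynomial_function (p k)"
    "\<And>k x. x \<in> {real k - 1..real k + 1} \<Longrightarrow> \<bar>R x - p k x\<bar> < exp (-(real k + 1))"
    by metis
  define \<beta> where "\<beta> k u = gstep (u + (1 - real k)) - gstep (u + (- real k))" for k :: nat and u :: real
  define a where "a k u = \<beta> k u * p k u" for k u
  define M where "M u = nat \<lceil>u\<rceil> + 1" for u :: real
  define S where "S u = (\<Sum>k<M u. a k u)" for u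
  have beta_zero: "\<beta> k u = 0" if "\<not> (real k - 1 < u \<and> u < real k + 1)" for k u
  proof (cases "u \<le> real k - 1")
    case True
    then show ?thesis by (simp add: \<beta>_def gstep_zero)
  next
    case False
    with that have "u \<ge> real k + 1" by simp
    then show ?thesis by (simp add: \<beta>_def gstep_one)
  qed
  have beta_bound: "\<bar>\<beta> k u\<bar> \<le> 1" for k u
    using gstep_bounds[of "u + (1 - real k)"] gstep_bounds[of "u + (- real k)"] by (simp add: \<beta>_def)
  have a_zero: "a k u = 0" if "real k \<ge> u + 1" for k u
    using beta_zero[of k u] that by (simp add: a_def)
  have sum_ext: "(\<Sum>k<N. a k u) = S u" if "real N \<ge> u + 1" for N u
  proof -
    define m where "m = min N (M u)"
    have Mu: "real (M u) \<ge> u + 1" unfolding M_def by linarith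
    have 1: "(\<Sum>k<N. a k u) = (\<Sum>k<m. a k u)"
      by (rule sum.mono_neutral_right) (auto simp: m_def intro!: a_zero, use that Mu in linarith)
    have 2: "(\<Sum>k<M u. a k u) = (\<Sum>k<m. a k u)"
      by (rule sum.mono_neutral_right) (auto simp: m_def intro!: a_zero, use that Mu in linarith)
    show ?thesis using 1 2 by (simp add: S_def)
  qed
  have a_smooth: "Cn n (a k) V" for n k V
  proof -
    have "Cn n (\<lambda>u. gstep (u + c)) V" for c
      using Cn_comp[of V "\<lambda>u. u + c" UNIV n gstep] gstep_smooth Cn_shift by (auto simp: smoothR_def)
    then have "Cn n (\<beta> k) V" unfolding \<beta>_def by (intro Cn_diff)
    then show ?thesis unfolding a_def using Cn_mult[OF _ Cn_rpf[OF p(1)]] by blast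
  qed
  have "smoothR S UNIV"
    unfolding smoothR_def
  proof
    fix n
    show "Cn n S UNIV"
    proof (rule Cn_local)
      fix x :: real
      define N where "N = nat \<lceil>x\<rceil> + 2"
      have "Cn n (\<lambda>u. \<Sum>k<N. a k u) {x-1<..<x+1}" by (intro Cn_sum a_smooth) auto
      moreover have "\<And>u. u \<in> {x-1<..<x+1} \<Longrightarrow> (\<Sum>k<N. a k u) = S u"
        by (rule sum_ext) (auto simp: N_def, linarith)
      ultimately have "Cn n S {x-1<..<x+1}" using Cn_cong[of "{x-1<..<x+1}" "\<lambda>u. \<Sum>k<N. a k u" S n] by auto
      then show "\<exists>V. open V \<and> x \<in> V \<and> V \<subseteq> UNIV \<and> Cn n S V" by (intro exI[of _ "{x-1<..<x+1}"]) auto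
    qed simp
  qed
  moreover have "\<bar>S u - R u\<bar> \<le> 2 * exp (-u)" if u0: "u \<ge> 0" for u
  proof -
    define N where "N = M u"
    define j where "j = nat \<lfloor>u\<rfloor>"
    have NU: "real N \<ge> u + 1" unfolding N_def M_def by linarith
    define f where "f n = gstep (u + (1 - real n))" for n :: nat
    have "(\<Sum>k<N. \<beta> k u) = (\<Sum>k<N. f k - f (Suc k))"
      by (intro sum.cong) (auto simp: \<beta>_def f_def algebra_simps)
    also have "\<dots> = f 0 - f N" by (rule sum_lessThan_telescope')
    also have "\<dots> = 1" unfolding f_def using NU u0 by (simp add: gstep_one gstep_zero)
    finally have sb: "(\<Sum>k<N. \<beta> k u) = 1" .
    have "S u - R u = (\<Sum>k<N. a k u) - (\<Sum>k<N. \<beta> k u) * R u" using sb by (simp add: S_def N_def)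
    also have "\<dots> = (\<Sum>k<N. \<beta> k u * (p k u - R u))"
      by (simp add: a_def sum_distrib_right sum_distrib_left sum_subtractf right_diff_distrib mult.commute)
    finally have eq: "S u - R u = (\<Sum>k<N. \<beta> k u * (p k u - R u))" .
    have tb: "\<bar>\<beta> k u * (p k u - R u)\<bar> \<le> (if k \<in> {j, Suc j} then exp (-u) else 0)" for k
    proof (cases "real k - 1 < u \<and> u < real k + 1")
      case True
      have "\<bar>R u - p k u\<bar> < exp (-(real k + 1))" using True by (intro p(2)) auto
      also have "\<dots> \<le> exp (-u)" using True by simp
      finally have 1: "\<bar>p k u - R u\<bar> \<le> exp (-u)" by simp
      have "\<bar>\<beta> k u * (p k u - R u)\<bar> \<le> 1 * exp (-u)"
        unfolding abs_mult by (intro mult_mono beta_bound 1) auto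
      moreover have "k \<in> {j, Suc j}" using True u0 unfolding j_def by (auto, linarith)
      ultimately show ?thesis by simp
    next
      case False
      then show ?thesis using beta_zero[of k u] by simp
    qed
    have "\<bar>S u - R u\<bar> \<le> (\<Sum>k<N. \<bar>\<beta> k u * (p k u - R u)\<bar>)" unfolding eq by (rule sum_abs)
    also have "\<dots> \<le> (\<Sum>k<N. (if k \<in> {j, Suc j} then exp (-u) else 0))" by (intro sum_mono tb)
    also have "\<dots> = (\<Sum>k\<in>{k\<in>{..<N}. k \<in> {j, Suc j}}. exp (-u))" by (rule sum.inter_filter[symmetric]) simp
    also have "\<dots> = real (card {k\<in>{..<N}. k \<in> {j, Suc j}}) * exp (-u)" by simp
    also have "\<dots> \<le> 2 * exp (-u)"
    proof -
      have "card {k\<in>{..<N}. k \<in> {j, Suc j}} \<le> card {j, Suc j}" by (rule card_mono) auto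
      then have "card {k\<in>{..<N}. k \<in> {j, Suc j}} \<le> 2" by simp
      then show ?thesis by (intro mult_right_mono) auto
    qed
    finally show ?thesis .
  qed
  ultimately show ?thesis by blast
qed

lemma approx_I:
  fixes r :: "real \<Rightarrow> real" assumes contr: "continuous_on {0<..1} r"
  shows "\<exists>A. smoothR A {0<..} \<and> (\<forall>x\<in>{0<..1}. \<bar>A x - r x\<bar> \<le> 2 * exp (- inverse x))"
proof -
  define R where "R u = r (inverse (max u 1))" for u
  have "continuous_on UNIV R"
    unfolding R_def
    by (rule continuous_on_compose2[OF contr]) (auto intro!: continuous_intros simp: field_simps)
  then obtain S where S: "smoothR S UNIV" "\<And>u. u \<ge> 0 \<Longrightarrow> \<bar>S u - R u\<bar> \<le> 2 * exp (-u)"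
    using approx_R by blast
  have "smoothR (\<lambda>x. S (inverse x)) {0<..}"
    unfolding smoothR_def
  proof
    fix n show "Cn n (\<lambda>x. S (inverse x)) {0<..}"
      using Cn_comp[of "{0<..}" inverse UNIV n S] Cn_inverse S(1) by (auto simp: smoothR_def)
  qed
  moreover have "\<bar>S (inverse x) - r x\<bar> \<le> 2 * exp (- inverse x)" if "x \<in> {0<..1}" for x
  proof -
    have "max (inverse x) 1 = inverse x" using that by (auto simp: field_simps)
    then have "R (inverse x) = r x" using that by (simp add: R_def)
    then show ?thesis using S(2)[of "inverse x"] that by simp
  qed
  ultimately show ?thesis by blast
qed




lemma coset_char:
  "H +>\<^bsub>net_ring S\<^esub> a = {z. (\<lambda>e. z e - a e) \<in> H}"
proof (rule Set.set_eqI)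
  fix z
  show "z \<in> H +>\<^bsub>net_ring S\<^esub> a \<longleftrightarrow> z \<in> {z. (\<lambda>e. z e - a e) \<in> H}"
  proof
    assume "z \<in> H +>\<^bsub>net_ring S\<^esub> a"
    then obtain h where "h \<in> H" "z = (\<lambda>e. h e + a e)"
      by (auto simp: a_r_coset_def r_coset_def net_ring_def)
    then show "z \<in> {z. (\<lambda>e. z e - a e) \<in> H}" by simp
  next
    assume "z \<in> {z. (\<lambda>e. z e - a e) \<in> H}"
    then have "(\<lambda>e. z e - a e) \<in> H" by simp
    moreover have "z = (\<lambda>e. (\<lambda>e. z e - a e) e + a e)" by simp
    ultimately show "z \<in> H +>\<^bsub>net_ring S\<^esub> a"
      unfolding a_r_coset_def r_coset_def net_ring_def by (auto intro!: bexI[of _ "\<lambda>e. z e - a e"])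
  qed
qed

lemma coset_same:
  assumes add: "\<And>x y. x \<in> H \<Longrightarrow> y \<in> H \<Longrightarrow> (\<lambda>e. x e + y e) \<in> H"
    and diff: "\<And>x y. x \<in> H \<Longrightarrow> y \<in> H \<Longrightarrow> (\<lambda>e. x e - y e) \<in> H"
    and yr: "(\<lambda>e. y e - r e) \<in> H"
  shows "{z. (\<lambda>e. z e - y e) \<in> H} = {z. (\<lambda>e. (z e :: 'a :: ab_group_add) - r e) \<in> H}"
proof (rule Set.set_eqI, rule iffI)
  fix z assume "z \<in> {z. (\<lambda>e. z e - y e) \<in> H}"
  then have z: "(\<lambda>e. z e - y e) \<in> H" by simp
  have "(\<lambda>e. (\<lambda>e. z e - y e) e + (\<lambda>e. y e - r e) e) \<in> H" by (rule add[OF z yr])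
  moreover have "(\<lambda>e. (\<lambda>e. z e - y e) e + (\<lambda>e. y e - r e) e) = (\<lambda>e. z e - r e)" by simp
  ultimately show "z \<in> {z. (\<lambda>e. z e - r e) \<in> H}" by simp
next
  fix z assume "z \<in> {z. (\<lambda>e. z e - r e) \<in> H}"
  then have z: "(\<lambda>e. z e - r e) \<in> H" by simp
  have "(\<lambda>e. (\<lambda>e. z e - r e) e - (\<lambda>e. y e - r e) e) \<in> H" by (rule diff[OF z yr])
  moreover have "(\<lambda>e. (\<lambda>e. z e - r e) e - (\<lambda>e. y e - r e) e) = (\<lambda>e. z e - y e)" by simp
  ultimately show "z \<in> {z. (\<lambda>e. z e - y e) \<in> H}" by simp
qed

lemma negl_add:
  assumes "Defs.negligible x" "Defs.negligible y"
  shows "Defs.negligible (\<lambda>e. x e + y e)"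
  unfolding Defs.negligible_def
proof
  fix m
  obtain C1 where 1: "\<forall>\<^sub>F e in at_right 0. norm (x e) \<le> C1 * e ^ m" using assms(1) Defs.negligible_def by blast
  obtain C2 where 2: "\<forall>\<^sub>F e in at_right 0. norm (y e) \<le> C2 * e ^ m" using assms(2) Defs.negligible_def by blast
  have "\<forall>\<^sub>F e in at_right 0. norm (x e + y e) \<le> (C1 + C2) * e ^ m"
    using 1 2 by eventually_elim (auto simp: algebra_simps intro: order_trans[OF norm_triangle_ineq])
  then show "\<exists>C. \<forall>\<^sub>F e in at_right 0. norm (x e + y e) \<le> C * e ^ m" by blast
qed

lemma negl_minus:
  assumes "Defs.negligible x"
  shows "Defs.negligible (\<lambda>e. - x e)"
  using assms unfolding Defs.negligible_def by simp

lemma negl_diff: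
  assumes "Defs.negligible x" "Defs.negligible y"
  shows "Defs.negligible (\<lambda>e. x e - y e)"
  using negl_add[OF assms(1) negl_minus[OF assms(2)]] by simp

lemma negl_mult:
  assumes "Defs.negligible x" "moderate y"
  shows "Defs.negligible (\<lambda>e. x e * y e)"
  unfolding Defs.negligible_def
proof
  fix m
  obtain N C' where y: "\<forall>\<^sub>F e in at_right 0. norm (y e) \<le> C' * (1 / e) ^ N"
    using assms(2) moderate_def by blast
  obtain C where x: "\<forall>\<^sub>F e in at_right 0. norm (x e) \<le> C * e ^ (m + N)"
    using assms(1) Defs.negligible_def by blast
  have "\<forall>\<^sub>F e in at_right 0. norm (x e * y e) \<le> (C * C') * e ^ m"
    using x y eventually_at_right_less[of "0::real"]
  proof eventually_elim
    case (elim e)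
    have "norm (x e * y e) = norm (x e) * norm (y e)" by (simp add: norm_mult)
    also have "\<dots> \<le> (C * e ^ (m + N)) * (C' * (1 / e) ^ N)"
      using elim by (intro mult_mono) (auto intro: order_trans[OF norm_ge_zero])
    also have "\<dots> = (C * C') * e ^ m"
      using elim by (simp add: power_add field_simps)
    finally show ?case .
  qed
  then show "\<exists>C. \<forall>\<^sub>F e in at_right 0. norm (x e * y e) \<le> C * e ^ m" by blast
qed

lemma negl_moderate: "Defs.negligible x \<Longrightarrow> moderate x"
proof -
  assume "Defs.negligible x"
  then obtain C where "\<forall>\<^sub>F e in at_right 0. norm (x e) \<le> C * e ^ 0"
    unfolding Defs.negligible_def by blast
  then have "\<forall>\<^sub>F e in at_right 0. norm (x e) \<le> C * (1 / e) ^ 0" by simp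
  then show "moderate x" unfolding moderate_def by blast
qed

lemma moderate_add_negl:
  assumes "moderate r" "Defs.negligible d"
  shows "moderate (\<lambda>e. r e + d e)"
proof -
  obtain N C1 where 1: "\<forall>\<^sub>F e in at_right 0. norm (r e) \<le> C1 * (1 / e) ^ N"
    using assms(1) moderate_def by blast
  obtain C2 where 2: "\<forall>\<^sub>F e in at_right 0. norm (d e) \<le> C2 * e ^ 0"
    using assms(2) Defs.negligible_def by blast
  have "\<forall>\<^sub>F e in at_right 0. norm (r e + d e) \<le> (\<bar>C1\<bar> + \<bar>C2\<bar>) * (1 / e) ^ N"
    using 1 2 eventually_at_right_real[OF zero_less_one]
  proof eventually_elim
    case (elim e)
    then have ge1: "(1 / e) ^ N \<ge> 1" by (intro one_le_power) (auto simp: field_simps)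
    have "norm (r e + d e) \<le> norm (r e) + norm (d e)" by (rule norm_triangle_ineq)
    also have "\<dots> \<le> \<bar>C1\<bar> * (1 / e) ^ N + \<bar>C2\<bar> * (1 / e) ^ N"
    proof (intro add_mono)
      show "norm (r e) \<le> \<bar>C1\<bar> * (1 / e) ^ N"
        using elim(1) by (rule order_trans) (intro mult_right_mono, use elim(3) in auto)
      have "norm (d e) \<le> \<bar>C2\<bar>" using elim(2) by simp
      also have "\<dots> \<le> \<bar>C2\<bar> * (1 / e) ^ N" using ge1 by (simp add: mult_le_cancel_left1)
      finally show "norm (d e) \<le> \<bar>C2\<bar> * (1 / e) ^ N" .
    qed
    finally show ?case by (simp add: algebra_simps)
  qed
  then show ?thesis unfolding moderate_def by blast
qed

lemma smooth_cont: "smooth_on_I r \<Longrightarrow> continuous_on I_eps r"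
proof -
  assume "smooth_on_I r"
  then obtain D where D: "\<forall>e\<in>I_eps. D 0 e = r e"
    "\<forall>n. \<forall>e\<in>I_eps. (D n has_vector_derivative D (Suc n) e) (at e within I_eps)"
    unfolding smooth_on_I_def by blast
  have "continuous_on I_eps (D 0)"
    using D(2) by (intro continuous_on_vector_derivative) auto
  then show ?thesis using D(1) continuous_on_cong by force
qed

lemma smooth_add: "smooth_on_I r \<Longrightarrow> smooth_on_I s \<Longrightarrow> smooth_on_I (\<lambda>e. r e + s e)"
proof -
  assume "smooth_on_I r" "smooth_on_I s"
  then obtain D E where D: "\<forall>e\<in>I_eps. D 0 e = r e"
    "\<forall>n. \<forall>e\<in>I_eps. (D n has_vector_derivative D (Suc n) e) (at e within I_eps)"
    and E: "\<forall>e\<in>I_eps. E 0 e = s e"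
    "\<forall>n. \<forall>e\<in>I_eps. (E n has_vector_derivative E (Suc n) e) (at e within I_eps)"
    unfolding smooth_on_I_def by blast
  show ?thesis unfolding smooth_on_I_def
    by (rule exI[of _ "\<lambda>n e. D n e + E n e"]) (use D E in \<open>auto intro: has_vector_derivative_add\<close>)
qed

lemma smooth_diff: "smooth_on_I r \<Longrightarrow> smooth_on_I s \<Longrightarrow> smooth_on_I (\<lambda>e. r e - s e)"
proof -
  assume "smooth_on_I r" "smooth_on_I s"
  then obtain D E where D: "\<forall>e\<in>I_eps. D 0 e = r e"
    "\<forall>n. \<forall>e\<in>I_eps. (D n has_vector_derivative D (Suc n) e) (at e within I_eps)"
    and E: "\<forall>e\<in>I_eps. E 0 e = s e"
    "\<forall>n. \<forall>e\<in>I_eps. (E n has_vector_derivative E (Suc n) e) (at e within I_eps)"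
    unfolding smooth_on_I_def by blast
  show ?thesis unfolding smooth_on_I_def
    by (rule exI[of _ "\<lambda>n e. D n e - E n e"]) (use D E in \<open>auto intro: has_vector_derivative_diff\<close>)
qed

lemma smooth_const: "smooth_on_I (\<lambda>e. if e \<in> I_eps then c else 0)"
  unfolding smooth_on_I_def
  by (rule exI[of _ "\<lambda>n e. if n = 0 then c else 0"]) auto

lemma N_co_add: "x \<in> N_co \<Longrightarrow> y \<in> N_co \<Longrightarrow> (\<lambda>e. x e + y e) \<in> N_co"
  by (auto simp: N_co_def net_def negl_add continuous_on_add)

lemma N_co_diff: "x \<in> N_co \<Longrightarrow> y \<in> N_co \<Longrightarrow> (\<lambda>e. x e - y e) \<in> N_co"
  by (auto simp: N_co_def net_def negl_diff continuous_on_diff)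

lemma N_sm_add: "x \<in> N_sm \<Longrightarrow> y \<in> N_sm \<Longrightarrow> (\<lambda>e. x e + y e) \<in> N_sm"
  by (auto simp: N_sm_def net_def negl_add smooth_add)

lemma N_sm_diff: "x \<in> N_sm \<Longrightarrow> y \<in> N_sm \<Longrightarrow> (\<lambda>e. x e - y e) \<in> N_sm"
  by (auto simp: N_sm_def net_def negl_diff smooth_diff)

lemma N_co_zero: "(\<lambda>e. 0) \<in> N_co"
  by (auto simp: N_co_def net_def Defs.negligible_def intro!: exI[of _ 0])

lemma N_sm_zero: "(\<lambda>e. 0) \<in> N_sm"
proof -
  have "smooth_on_I (\<lambda>e. if e \<in> I_eps then 0 else 0)" by (rule smooth_const)
  then show ?thesis by (auto simp: N_sm_def net_def Defs.negligible_def intro!: exI[of _ 0])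
qed

lemma N_sm_co: "x \<in> N_sm \<Longrightarrow> x \<in> N_co"
  by (auto simp: N_sm_def N_co_def smooth_cont)

lemma EM_sm_co: "x \<in> EM_sm \<Longrightarrow> x \<in> EM_co"
  by (auto simp: EM_sm_def EM_co_def smooth_cont)

lemma N_co_EM: "x \<in> N_co \<Longrightarrow> x \<in> EM_co"
  by (auto simp: N_co_def EM_co_def negl_moderate)

lemma N_co_mult: "x \<in> N_co \<Longrightarrow> y \<in> EM_co \<Longrightarrow> (\<lambda>e. x e * y e) \<in> N_co"
  by (auto simp: N_co_def EM_co_def net_def negl_mult continuous_on_mult)

lemma N_co_mult': "x \<in> N_co \<Longrightarrow> y \<in> EM_co \<Longrightarrow> (\<lambda>e. y e * x e) \<in> N_co"
  using N_co_mult[of x y] by (simp add: mult.commute)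

lemma prod_diff:
  assumes "r \<in> EM_co" "s \<in> EM_co" "(\<lambda>e. a e - r e) \<in> N_co" "(\<lambda>e. b e - s e) \<in> N_co"
  shows "(\<lambda>e. a e * b e - r e * s e) \<in> N_co"
proof -
  define n1 where "n1 = (\<lambda>e. a e - r e)"
  define n2 where "n2 = (\<lambda>e. b e - s e)"
  have n: "n1 \<in> N_co" "n2 \<in> N_co" using assms by (auto simp: n1_def n2_def)
  have "(\<lambda>e. (n1 e * n2 e + n1 e * s e) + r e * n2 e) \<in> N_co"
    using N_co_add[OF N_co_add[OF N_co_mult[OF n(1) N_co_EM[OF n(2)]] N_co_mult[OF n(1) assms(2)]] N_co_mult'[OF n(2) assms(1)]] .
  moreover have "(\<lambda>e. (n1 e * n2 e + n1 e * s e) + r e * n2 e) = (\<lambda>e. a e * b e - r e * s e)"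
    by (auto simp: n1_def n2_def algebra_simps)
  ultimately show ?thesis by simp
qed

lemma coset_same_co:
  "(\<lambda>e. y e - r e) \<in> N_co \<Longrightarrow> {z. (\<lambda>e. z e - y e) \<in> N_co} = {z. (\<lambda>e. z e - r e) \<in> N_co}"
  by (rule coset_same) (auto intro: N_co_add N_co_diff)

lemma coset_same_sm:
  "(\<lambda>e. y e - r e) \<in> N_sm \<Longrightarrow> {z. (\<lambda>e. z e - y e) \<in> N_sm} = {z. (\<lambda>e. z e - r e) \<in> N_sm}"
  by (rule coset_same) (auto intro: N_sm_add N_sm_diff)

lemma tau_coset:
  assumes "Y \<noteq> {}" "\<And>y. y \<in> Y \<Longrightarrow> (\<lambda>e. y e - r e) \<in> N_co"
  shows "tau_sm Y = N_co +>\<^bsub>net_ring EM_co\<^esub> r"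
proof -
  have "\<And>y. y \<in> Y \<Longrightarrow> N_co +>\<^bsub>net_ring EM_co\<^esub> y = N_co +>\<^bsub>net_ring EM_co\<^esub> r"
    unfolding coset_char using assms(2) coset_same_co by blast
  then show ?thesis using assms(1) unfolding tau_sm_def by auto
qed

lemma carrier_quot: "carrier (net_ring S Quot N) = (\<lambda>a. N +>\<^bsub>net_ring S\<^esub> a) ` S"
  by (auto simp: FactRing_def A_RCOSETS_def' net_ring_def)

lemma tau_elem:
  assumes "r \<in> EM_sm"
  shows "tau_sm (N_sm +>\<^bsub>net_ring EM_sm\<^esub> r) = N_co +>\<^bsub>net_ring EM_co\<^esub> r"
proof (rule tau_coset)
  have "r \<in> N_sm +>\<^bsub>net_ring EM_sm\<^esub> r" unfolding coset_char using N_sm_zero by simp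
  then show "N_sm +>\<^bsub>net_ring EM_sm\<^esub> r \<noteq> {}" by blast
qed (auto simp: coset_char intro: N_sm_co)

lemma iso_generic:
  assumes approx: "\<And>r. r \<in> (EM_co :: (real \<Rightarrow> 'k::real_normed_field) set) \<Longrightarrow> \<exists>s\<in>EM_sm. (\<lambda>e. s e - r e) \<in> N_co"
  shows "(tau_sm :: (real \<Rightarrow> 'k) set \<Rightarrow> _) \<in> ring_iso K_sm K_co"
proof -
  let ?Rs = "net_ring (EM_sm :: (real \<Rightarrow> 'k) set)"
  let ?Rc = "net_ring (EM_co :: (real \<Rightarrow> 'k) set)"
  have cs: "carrier (K_sm :: (real \<Rightarrow> 'k) set ring) = (\<lambda>a. N_sm +>\<^bsub>?Rs\<^esub> a) ` EM_sm"
    unfolding K_sm_def by (rule carrier_quot)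
  have cc: "carrier (K_co :: (real \<Rightarrow> 'k) set ring) = (\<lambda>a. N_co +>\<^bsub>?Rc\<^esub> a) ` EM_co"
    unfolding K_co_def by (rule carrier_quot)
  have hom: "tau_sm \<in> ring_hom (K_sm :: (real \<Rightarrow> 'k) set ring) K_co"
  proof (rule ring_hom_memI)
    fix x :: "(real \<Rightarrow> 'k) set" assume "x \<in> carrier K_sm"
    then obtain r where r: "r \<in> EM_sm" "x = N_sm +>\<^bsub>?Rs\<^esub> r" using cs by auto
    then show "tau_sm x \<in> carrier K_co" unfolding r(2) tau_elem[OF r(1)] cc using EM_sm_co[OF r(1)] by blast
  next
    fix x y :: "(real \<Rightarrow> 'k) set" assume "x \<in> carrier K_sm" "y \<in> carrier K_sm"
    then obtain r s where r: "r \<in> EM_sm" "x = N_sm +>\<^bsub>?Rs\<^esub> r"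
      and s: "s \<in> EM_sm" "y = N_sm +>\<^bsub>?Rs\<^esub> s" using cs by auto
    have rc: "r \<in> EM_co" "s \<in> EM_co" using r s EM_sm_co by auto
    have rx: "r \<in> x" "s \<in> y" using r s N_sm_zero by (auto simp: coset_char)
    have "x \<otimes>\<^bsub>K_sm\<^esub> y = (\<Union>a\<in>x. \<Union>b\<in>y. N_sm +>\<^bsub>?Rs\<^esub> (\<lambda>e. a e * b e))"
      by (simp add: K_sm_def FactRing_def rcoset_mult_def net_ring_def)
    then have "tau_sm (x \<otimes>\<^bsub>K_sm\<^esub> y) = N_co +>\<^bsub>?Rc\<^esub> (\<lambda>e. r e * s e)"
    proof (intro tau_coset)
      assume eq: "x \<otimes>\<^bsub>K_sm\<^esub> y = (\<Union>a\<in>x. \<Union>b\<in>y. N_sm +>\<^bsub>?Rs\<^esub> (\<lambda>e. a e * b e))"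
      have "(\<lambda>e. r e * s e) \<in> N_sm +>\<^bsub>?Rs\<^esub> (\<lambda>e. r e * s e)"
        using N_sm_zero by (simp add: coset_char)
      then show "x \<otimes>\<^bsub>K_sm\<^esub> y \<noteq> {}"
        unfolding eq using rx by blast
      fix z assume "z \<in> x \<otimes>\<^bsub>K_sm\<^esub> y"
      then obtain a b where ab: "a \<in> x" "b \<in> y" "(\<lambda>e. z e - a e * b e) \<in> N_sm"
        unfolding eq by (auto simp: coset_char)
      have "(\<lambda>e. a e - r e) \<in> N_co" "(\<lambda>e. b e - s e) \<in> N_co"
        using ab r s by (auto simp: coset_char intro: N_sm_co)
      then have "(\<lambda>e. a e * b e - r e * s e) \<in> N_co" using prod_diff rc by blast
      then have "(\<lambda>e. (z e - a e * b e) + (a e * b e - r e * s e)) \<in> N_co"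
        using N_co_add[OF N_sm_co[OF ab(3)]] by blast
      then show "(\<lambda>e. z e - r e * s e) \<in> N_co" by simp
    qed
    moreover have "tau_sm x \<otimes>\<^bsub>K_co\<^esub> tau_sm y = N_co +>\<^bsub>?Rc\<^esub> (\<lambda>e. r e * s e)"
    proof -
      have tx: "tau_sm x = N_co +>\<^bsub>?Rc\<^esub> r" "tau_sm y = N_co +>\<^bsub>?Rc\<^esub> s"
        using tau_elem r s by auto
      have "tau_sm x \<otimes>\<^bsub>K_co\<^esub> tau_sm y =
          (\<Union>a\<in>N_co +>\<^bsub>?Rc\<^esub> r. \<Union>b\<in>N_co +>\<^bsub>?Rc\<^esub> s. N_co +>\<^bsub>?Rc\<^esub> (\<lambda>e. a e * b e))"
        unfolding tx by (simp add: K_co_def FactRing_def rcoset_mult_def net_ring_def)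
      also have "\<dots> = N_co +>\<^bsub>?Rc\<^esub> (\<lambda>e. r e * s e)"
      proof -
        have inner: "N_co +>\<^bsub>?Rc\<^esub> (\<lambda>e. a e * b e) = N_co +>\<^bsub>?Rc\<^esub> (\<lambda>e. r e * s e)"
          if "a \<in> N_co +>\<^bsub>?Rc\<^esub> r" "b \<in> N_co +>\<^bsub>?Rc\<^esub> s" for a b
        proof -
          have "(\<lambda>e. a e * b e - r e * s e) \<in> N_co"
            using that rc prod_diff by (auto simp: coset_char)
          then show ?thesis unfolding coset_char using coset_same_co[of "\<lambda>e. a e * b e" "\<lambda>e. r e * s e"] by simp
        qed
        have ne: "r \<in> N_co +>\<^bsub>?Rc\<^esub> r" "s \<in> N_co +>\<^bsub>?Rc\<^esub> s"
          using N_co_zero by (auto simp: coset_char)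
        show ?thesis using inner ne by blast
      qed
      finally show ?thesis .
    qed
    ultimately show "tau_sm (x \<otimes>\<^bsub>K_sm\<^esub> y) = tau_sm x \<otimes>\<^bsub>K_co\<^esub> tau_sm y" by simp
    have "x \<oplus>\<^bsub>K_sm\<^esub> y = (\<Union>a\<in>x. \<Union>b\<in>y. {\<lambda>e. a e + b e})"
      by (simp add: K_sm_def FactRing_def set_add_def' net_ring_def)
    then have "tau_sm (x \<oplus>\<^bsub>K_sm\<^esub> y) = N_co +>\<^bsub>?Rc\<^esub> (\<lambda>e. r e + s e)"
    proof (intro tau_coset)
      assume eq: "x \<oplus>\<^bsub>K_sm\<^esub> y = (\<Union>a\<in>x. \<Union>b\<in>y. {\<lambda>e. a e + b e})"
      show "x \<oplus>\<^bsub>K_sm\<^esub> y \<noteq> {}" unfolding eq using rx by auto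
      fix z assume "z \<in> x \<oplus>\<^bsub>K_sm\<^esub> y"
      then obtain a b where ab: "a \<in> x" "b \<in> y" "z = (\<lambda>e. a e + b e)" unfolding eq by auto
      have "(\<lambda>e. a e - r e) \<in> N_co" "(\<lambda>e. b e - s e) \<in> N_co"
        using ab r s by (auto simp: coset_char intro: N_sm_co)
      then have "(\<lambda>e. (a e - r e) + (b e - s e)) \<in> N_co" by (rule N_co_add)
      then show "(\<lambda>e. z e - (r e + s e)) \<in> N_co" by (simp add: ab algebra_simps)
    qed
    moreover have "tau_sm x \<oplus>\<^bsub>K_co\<^esub> tau_sm y = N_co +>\<^bsub>?Rc\<^esub> (\<lambda>e. r e + s e)"
    proof -
      have tx: "tau_sm x = N_co +>\<^bsub>?Rc\<^esub> r" "tau_sm y = N_co +>\<^bsub>?Rc\<^esub> s"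
        using tau_elem r s by auto
      have "tau_sm x \<oplus>\<^bsub>K_co\<^esub> tau_sm y = (\<Union>a\<in>N_co +>\<^bsub>?Rc\<^esub> r. \<Union>b\<in>N_co +>\<^bsub>?Rc\<^esub> s. {\<lambda>e. a e + b e})"
        unfolding tx by (simp add: K_co_def FactRing_def set_add_def' net_ring_def)
      also have "\<dots> = N_co +>\<^bsub>?Rc\<^esub> (\<lambda>e. r e + s e)"
      proof (rule Set.set_eqI, rule iffI)
        fix z assume "z \<in> (\<Union>a\<in>N_co +>\<^bsub>?Rc\<^esub> r. \<Union>b\<in>N_co +>\<^bsub>?Rc\<^esub> s. {\<lambda>e. a e + b e})"
        then obtain a b where ab: "(\<lambda>e. a e - r e) \<in> N_co" "(\<lambda>e. b e - s e) \<in> N_co" "z = (\<lambda>e. a e + b e)"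
          by (auto simp: coset_char)
        then have "(\<lambda>e. (a e - r e) + (b e - s e)) \<in> N_co" using N_co_add by blast
        then show "z \<in> N_co +>\<^bsub>?Rc\<^esub> (\<lambda>e. r e + s e)"
          by (simp add: coset_char ab algebra_simps)
      next
        fix z assume "z \<in> N_co +>\<^bsub>?Rc\<^esub> (\<lambda>e. r e + s e)"
        then have z: "(\<lambda>e. z e - (r e + s e)) \<in> N_co" by (simp add: coset_char)
        have "(\<lambda>e. z e - s e) \<in> N_co +>\<^bsub>?Rc\<^esub> r" using z by (simp add: coset_char algebra_simps)
        moreover have "s \<in> N_co +>\<^bsub>?Rc\<^esub> s" using N_co_zero by (simp add: coset_char)
        moreover have "z = (\<lambda>e. (\<lambda>e. z e - s e) e + s e)" by simp
        ultimately show "z \<in> (\<Union>a\<in>N_co +>\<^bsub>?Rc\<^esub> r. \<Union>b\<in>N_co +>\<^bsub>?Rc\<^esub> s. {\<lambda>e. a e + b e})"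
          by blast
      qed
      finally show ?thesis .
    qed
    ultimately show "tau_sm (x \<oplus>\<^bsub>K_sm\<^esub> y) = tau_sm x \<oplus>\<^bsub>K_co\<^esub> tau_sm y" by simp
  next
    have one: "(\<lambda>e. if e \<in> I_eps then (1::'k) else 0) \<in> EM_sm"
    proof -
      have "\<forall>\<^sub>F e in at_right 0. norm (if e \<in> I_eps then (1::'k) else 0) \<le> 1 * (1 / e) ^ 0"
        by (rule always_eventually) simp
      then have "moderate (\<lambda>e. if e \<in> I_eps then (1::'k) else 0)" unfolding moderate_def by blast
      then show ?thesis using smooth_const[of "1::'k"] by (auto simp: EM_sm_def net_def)
    qed
    have "\<one>\<^bsub>(K_sm :: (real \<Rightarrow> 'k) set ring)\<^esub> = N_sm +>\<^bsub>?Rs\<^esub> (\<lambda>e. if e \<in> I_eps then 1 else 0)"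
      by (simp add: K_sm_def FactRing_def net_ring_def)
    moreover have "\<one>\<^bsub>(K_co :: (real \<Rightarrow> 'k) set ring)\<^esub> = N_co +>\<^bsub>?Rc\<^esub> (\<lambda>e. if e \<in> I_eps then 1 else 0)"
      by (simp add: K_co_def FactRing_def net_ring_def)
    ultimately show "tau_sm \<one>\<^bsub>(K_sm :: (real \<Rightarrow> 'k) set ring)\<^esub> = \<one>\<^bsub>(K_co :: (real \<Rightarrow> 'k) set ring)\<^esub>"
      using tau_elem[OF one] by simp
  qed
  have inj: "inj_on tau_sm (carrier (K_sm :: (real \<Rightarrow> 'k) set ring))"
  proof (rule inj_onI)
    fix x y :: "(real \<Rightarrow> 'k) set" assume "x \<in> carrier K_sm" "y \<in> carrier K_sm" and eq: "tau_sm x = tau_sm y"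
    then obtain r s where r: "r \<in> EM_sm" "x = N_sm +>\<^bsub>?Rs\<^esub> r"
      and s: "s \<in> EM_sm" "y = N_sm +>\<^bsub>?Rs\<^esub> s" using cs by auto
    have "N_co +>\<^bsub>?Rc\<^esub> r = N_co +>\<^bsub>?Rc\<^esub> s" using eq tau_elem r s by auto
    moreover have "r \<in> N_co +>\<^bsub>?Rc\<^esub> r" using N_co_zero by (simp add: coset_char)
    ultimately have "(\<lambda>e. r e - s e) \<in> N_co" by (simp add: coset_char)
    moreover have "smooth_on_I (\<lambda>e. r e - s e)" using r s by (auto simp: EM_sm_def intro: smooth_diff)
    ultimately have rs: "(\<lambda>e. r e - s e) \<in> N_sm" by (auto simp: N_co_def N_sm_def)
    show "x = y" unfolding r s coset_char using coset_same_sm[OF rs] by simp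
  qed
  have img: "tau_sm ` carrier (K_sm :: (real \<Rightarrow> 'k) set ring) = carrier K_co"
  proof
    show "tau_sm ` carrier K_sm \<subseteq> carrier (K_co :: (real \<Rightarrow> 'k) set ring)"
      using hom unfolding ring_hom_def by auto
  next
    show "carrier (K_co :: (real \<Rightarrow> 'k) set ring) \<subseteq> tau_sm ` carrier K_sm"
    proof
      fix x :: "(real \<Rightarrow> 'k) set" assume "x \<in> carrier K_co"
      then obtain r where r: "r \<in> EM_co" "x = N_co +>\<^bsub>?Rc\<^esub> r" using cc by auto
      obtain s where s: "s \<in> EM_sm" "(\<lambda>e. s e - r e) \<in> N_co" using approx[OF r(1)] by blast
      have "tau_sm (N_sm +>\<^bsub>?Rs\<^esub> s) = N_co +>\<^bsub>?Rc\<^esub> s" by (rule tau_elem[OF s(1)])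
      also have "\<dots> = x" unfolding r coset_char using coset_same_co[OF s(2)] by simp
      finally show "x \<in> tau_sm ` carrier K_sm" using cs s(1) by (auto intro!: image_eqI[of _ tau_sm "N_sm +>\<^bsub>?Rs\<^esub> s"])
    qed
  qed
  show ?thesis unfolding ring_iso_def using hom inj img by (auto simp: bij_betw_def)
qed


section \<open>Approximation property for real and complex nets\<close>

lemma negl_exp:
  assumes "\<forall>e\<in>I_eps. norm (d e) \<le> C * exp (- inverse e)"
  shows "Defs.negligible d"
  unfolding Defs.negligible_def
proof
  fix m :: nat
  have lim: "((\<lambda>e. inverse e ^ m / exp (inverse e)) \<longlongrightarrow> 0) (at_right (0::real))"
    using filterlim_compose[OF tendsto_power_div_exp_0[of m] filterlim_inverse_at_top_right]
    by (simp add: o_def)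
  have "\<forall>\<^sub>F e in at_right 0. norm (d e) \<le> \<bar>C\<bar> * e ^ m"
    using order_tendstoD(2)[OF lim zero_less_one] eventually_at_right_real[OF zero_less_one]
  proof eventually_elim
    case (elim e)
    then have e: "0 < e" "e < 1" by auto
    have "inverse e ^ m < exp (inverse e)" using elim(1) by (simp add: divide_less_eq)
    then have "inverse (exp (inverse e)) < inverse (inverse e ^ m)"
      using e by (intro less_imp_inverse_less) auto
    then have ex: "exp (- inverse e) \<le> e ^ m" by (simp add: exp_minus power_inverse)
    have "norm (d e) \<le> C * exp (- inverse e)" using assms e by (auto simp: I_eps_def)
    also have "\<dots> \<le> \<bar>C\<bar> * exp (- inverse e)" by (intro mult_right_mono) auto
    also have "\<dots> \<le> \<bar>C\<bar> * e ^ m" using ex by (intro mult_left_mono) auto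
    finally show ?case .
  qed
  then show "\<exists>C. \<forall>\<^sub>F e in at_right 0. norm (d e) \<le> C * e ^ m" by blast
qed

lemma finish:
  assumes "net s" "smooth_on_I s" "r \<in> EM_co" "Defs.negligible (\<lambda>e. s e - r e)"
  shows "s \<in> EM_sm \<and> (\<lambda>e. s e - r e) \<in> N_co"
proof
  have "moderate (\<lambda>e. r e + (s e - r e))"
    using assms(3,4) by (intro moderate_add_negl) (auto simp: EM_co_def)
  then show "s \<in> EM_sm" using assms(1,2) by (simp add: EM_sm_def)
  show "(\<lambda>e. s e - r e) \<in> N_co"
    using assms smooth_cont[OF assms(2)]
    by (auto simp: N_co_def EM_co_def net_def intro: continuous_on_diff)
qed

lemma approx_real:
  assumes "r \<in> (EM_co :: (real \<Rightarrow> real) set)"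
  shows "\<exists>s\<in>EM_sm. (\<lambda>e. s e - r e) \<in> N_co"
proof -
  have "continuous_on {0<..1} r" using assms by (simp add: EM_co_def I_eps_def)
  then obtain A where A: "smoothR A {0<..}" "\<And>x. x \<in> {0<..1} \<Longrightarrow> \<bar>A x - r x\<bar> \<le> 2 * exp (- inverse x)"
    using approx_I by blast
  define s where "s e = (if e \<in> I_eps then A e else 0)" for e
  have "net s" by (simp add: s_def net_def)
  moreover have "smooth_on_I s"
    unfolding smooth_on_I_def
  proof (intro exI[of _ "\<lambda>n. (deriv ^^ n) A"] conjI ballI allI)
    fix e assume "e \<in> I_eps"
    then show "(deriv ^^ 0) A e = s e" by (simp add: s_def)
  next
    fix n e assume e: "e \<in> I_eps"
    then have "((deriv ^^ n) A has_real_derivative (deriv ^^ Suc n) A e) (at e)"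
      using smooth_derivs[OF open_greaterThan A(1)] by (auto simp: I_eps_def)
    then show "((deriv ^^ n) A has_vector_derivative (deriv ^^ Suc n) A e) (at e within I_eps)"
      by (simp add: has_real_derivative_iff_has_vector_derivative[symmetric] has_field_derivative_at_within)
  qed
  moreover have "Defs.negligible (\<lambda>e. s e - r e)"
    by (rule negl_exp[of _ 2]) (use A(2) in \<open>auto simp: s_def I_eps_def\<close>)
  ultimately show ?thesis using finish[OF _ _ assms] by blast
qed

lemma approx_complex:
  assumes "r \<in> (EM_co :: (real \<Rightarrow> complex) set)"
  shows "\<exists>s\<in>EM_sm. (\<lambda>e. s e - r e) \<in> N_co"
proof -
  have c: "continuous_on {0<..1} r" using assms by (simp add: EM_co_def I_eps_def)
  have "continuous_on {0<..1} (\<lambda>e. Re (r e))" using c by (intro continuous_intros)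
  then obtain A where A: "smoothR A {0<..}" "\<And>x. x \<in> {0<..1} \<Longrightarrow> \<bar>A x - Re (r x)\<bar> \<le> 2 * exp (- inverse x)"
    using approx_I by blast
  have "continuous_on {0<..1} (\<lambda>e. Im (r e))" using c by (intro continuous_intros)
  then obtain B where B: "smoothR B {0<..}" "\<And>x. x \<in> {0<..1} \<Longrightarrow> \<bar>B x - Im (r x)\<bar> \<le> 2 * exp (- inverse x)"
    using approx_I by blast
  define s where "s e = (if e \<in> I_eps then complex_of_real (A e) + \<i> * complex_of_real (B e) else 0)" for e
  have "net s" by (simp add: s_def net_def)
  moreover have "smooth_on_I s"
    unfolding smooth_on_I_def
  proof (intro exI[of _ "\<lambda>n e. complex_of_real ((deriv ^^ n) A e) + \<i> * complex_of_real ((deriv ^^ n) B e)"] conjI ballI allI)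
    fix e assume "e \<in> I_eps"
    then show "complex_of_real ((deriv ^^ 0) A e) + \<i> * complex_of_real ((deriv ^^ 0) B e) = s e" by (simp add: s_def)
  next
    fix n e assume e: "e \<in> I_eps"
    then have "((deriv ^^ n) A has_real_derivative (deriv ^^ Suc n) A e) (at e)"
      using smooth_derivs[OF open_greaterThan A(1)] by (auto simp: I_eps_def)
    then have dA: "((deriv ^^ n) A has_real_derivative (deriv ^^ Suc n) A e) (at e within I_eps)"
      by (rule has_field_derivative_at_within)
    have "((deriv ^^ n) B has_real_derivative (deriv ^^ Suc n) B e) (at e)"
      using e smooth_derivs[OF open_greaterThan B(1)] by (auto simp: I_eps_def)
    then have dB: "((deriv ^^ n) B has_real_derivative (deriv ^^ Suc n) B e) (at e within I_eps)"
      by (rule has_field_derivative_at_within)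
    show "((\<lambda>e. complex_of_real ((deriv ^^ n) A e) + \<i> * complex_of_real ((deriv ^^ n) B e)) has_vector_derivative
        complex_of_real ((deriv ^^ Suc n) A e) + \<i> * complex_of_real ((deriv ^^ Suc n) B e)) (at e within I_eps)"
      by (intro has_vector_derivative_add has_vector_derivative_mult_right has_vector_derivative_of_real dA dB)
  qed
  moreover have "Defs.negligible (\<lambda>e. s e - r e)"
  proof (rule negl_exp[of _ 4], intro ballI)
    fix e assume e: "e \<in> I_eps"
    have "s e - r e = complex_of_real (A e - Re (r e)) + \<i> * complex_of_real (B e - Im (r e))"
      using e complex_eq[of "r e"] by (simp add: s_def algebra_simps)
    then have "norm (s e - r e) \<le> norm (complex_of_real (A e - Re (r e))) + norm (\<i> * complex_of_real (B e - Im (r e)))"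
      using norm_triangle_ineq by metis
    also have "\<dots> = \<bar>A e - Re (r e)\<bar> + \<bar>B e - Im (r e)\<bar>" by (simp only: norm_mult norm_of_real norm_ii mult_1_left)
    also have "\<dots> \<le> 2 * exp (- inverse e) + 2 * exp (- inverse e)"
      using A(2) B(2) e by (intro add_mono) (auto simp: I_eps_def)
    finally show "norm (s e - r e) \<le> 4 * exp (- inverse e)" by simp
  qed
  ultimately show ?thesis using finish[OF _ _ assms] by blast
qed

theorem theorem3p6:
  shows "(tau_sm :: (real \<Rightarrow> real) set \<Rightarrow> _) \<in> ring_iso K_sm K_co
       \<and> (tau_sm :: (real \<Rightarrow> complex) set \<Rightarrow> _) \<in> ring_iso K_sm K_co"
  using iso_generic[OF approx_real] iso_generic[OF approx_complex] by blast

end
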